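(* Let $A_1,\ldots,A_n$ be events in a probability space and let $X$ be the number of these events that occur. Let $k$ be an integer with $1\le k<n$. For distinct indices $i_1,\ldots,i_k\in\{1,\ldots,n\}$ and $1\le s\le n-k$, let $W_s(i_1,\ldots,i_k)$ be the $s$-th largest of the $n-k$ values $P(A_{i_1}\cdots A_{i_k}A_j)$, $j\in\{1,\ldots,n\}\setminus\{i_1,\ldots,i_k\}$ (counted with multiplicity). Then $$E\left[\binom{X-1}{k}\right]\ge\sum_{1\le i_1<\cdots<i_k\le n}\ \sum_{s=1}^{n-k}W_s(i_1,\ldots,i_k)\frac{k}{(k+s)(k+s-1)}.$$
   Context: Binomial convention: for integers $s,t$, $\binom{t}{s}=0$ if $\min(s,t)<0$ or $s>t$; otherwise $\binom{t}{s}=\frac{t!}{s!(t-s)!}$. $A_{i_1}\cdots A_{i_k}A_j$ denotes the intersection of the events. *)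

theory Defs
  imports "HOL-Probability.Probability"
begin

definition binom_int :: "int \<Rightarrow> int \<Rightarrow> real" where
  "binom_int t s = (if min s t < 0 \<or> s > t then 0 else real (nat t choose nat s))"

definition kth_largest :: "(nat \<Rightarrow> real) \<Rightarrow> nat set \<Rightarrow> nat \<Rightarrow> real" where
  "kth_largest f J s = rev (sort (map f (sorted_list_of_set J))) ! (s - 1)"

end

theory Submission
  imports Defs "HOL-Combinatorics.Permutations"
begin

lemma rearr:
  fixes c :: "nat \<Rightarrow> real"
  assumes mono: "\<And>a b. 1 \<le> a \<Longrightarrow> a \<le> b \<Longrightarrow> c b \<le> c a"
  shows "S \<subseteq> {1..m} \<Longrightarrow> (\<Sum>s\<in>S. c s) \<le> (\<Sum>s=1..card S. c s)"
proof (induction m arbitrary: S)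
  case 0
  then have "S = {}" by auto
  then show ?case by simp
next
  case (Suc m)
  show ?case
  proof (cases "Suc m \<in> S")
    case False
    have "S \<subseteq> {1..m}"
    proof
      fix x assume "x \<in> S"
      with Suc.prems False show "x \<in> {1..m}" by (cases "x = Suc m") auto
    qed
    then show ?thesis using Suc.IH by blast
  next
    case True
    define S' where "S' = S - {Suc m}"
    have S': "S' \<subseteq> {1..m}" using Suc.prems unfolding S'_def by auto
    have fin: "finite S'" using S' finite_subset by blast
    have cS: "card S = Suc (card S')" unfolding S'_def using True fin
      by (metis S'_def card.remove finite_Diff2 finite_insert insert_Diff)
    have le: "card S' \<le> m" using card_mono[OF _ S'] by simp
    have "(\<Sum>s\<in>S. c s) = c (Suc m) + (\<Sum>s\<in>S'. c s)"
      unfolding S'_def using True fin by (metis S'_def sum.remove finite_Diff2 finite_insert insert_Diff)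
    also have "\<dots> \<le> c (Suc (card S')) + (\<Sum>s=1..card S'. c s)"
      using Suc.IH[OF S'] mono[of "Suc (card S')" "Suc m"] le by simp
    also have "\<dots> = (\<Sum>s=1..card S. c s)" using cS by simp
    finally show ?thesis .
  qed
qed

lemma rearr2:
  fixes c :: "nat \<Rightarrow> real"
  assumes mono: "\<And>a b. 1 \<le> a \<Longrightarrow> a \<le> b \<Longrightarrow> c b \<le> c a"
    and pos: "\<And>s. 1 \<le> s \<Longrightarrow> 0 \<le> c s"
    and inj: "inj_on \<sigma> {1..m}" and T: "finite T"
  shows "(\<Sum>s=1..m. c s * of_bool (\<sigma> s \<in> T)) \<le> (\<Sum>s=1..card T. c s)"
proof -
  define S where "S = {s\<in>{1..m}. \<sigma> s \<in> T}"
  have "(\<Sum>s=1..m. c s * of_bool (\<sigma> s \<in> T)) = (\<Sum>s\<in>S. c s)"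
    unfolding S_def by (simp add: sum.inter_filter[symmetric] of_bool_def if_distrib cong: if_cong)
  also have "\<dots> \<le> (\<Sum>s=1..card S. c s)" by (rule rearr[OF mono]) (auto simp: S_def)
  also have "card S \<le> card T"
  proof (rule card_inj_on_le)
    show "inj_on \<sigma> S" using inj by (rule inj_on_subset) (auto simp: S_def)
    show "\<sigma> ` S \<subseteq> T" by (auto simp: S_def)
    show "finite T" by (rule T)
  qed
  hence "(\<Sum>s=1..card S. c s) \<le> (\<Sum>s=1..card T. c s)"
    by (intro sum_mono2) (auto intro: pos)
  finally show ?thesis .
qed

lemma tel_step:
  assumes "(a::real) > 0"
  shows "y / a + (a - y) / ((a + 1) * a) = (y + 1) / (a + 1)"
proof -
  have n: "a \<noteq> 0" "a + 1 \<noteq> 0" using assms by auto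
  have e1: "y / a = (y * (a+1)) / ((a + 1) * a)" using n by simp
  have "y / a + (a - y) / ((a + 1) * a) = (y * (a+1) + (a - y)) / ((a + 1) * a)"
    unfolding e1 by (simp only: add_divide_distrib)
  also have "y * (a+1) + (a - y) = (y + 1) * a" by (simp add: algebra_simps)
  also have "(y + 1) * a / ((a + 1) * a) = (y + 1) / (a + 1)" using n by simp
  finally show ?thesis .
qed

lemma telesc:
  assumes "1 \<le> k"
  shows "(\<Sum>s=1..y. real k / (real (k + s) * real (k + s - 1))) = real y / (real k + real y)"
proof (induction y)
  case 0 then show ?case by simp
next
  case (Suc y)
  have p: "real k + real y > 0" using assms by simp
  have e: "real (k + Suc y - 1) = real k + real y" by simp
  have e2: "real (k + Suc y) = real k + real y + 1" by simp
  have "(\<Sum>s=1..Suc y. real k / (real (k + s) * real (k + s - 1)))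
     = (\<Sum>s=1..y. real k / (real (k + s) * real (k + s - 1))) + real k / (real (k + Suc y) * real (k + Suc y - 1))"
    by simp
  also have "\<dots> = real y / (real k + real y) + real k / ((real k + real y + 1) * (real k + real y))"
    unfolding Suc.IH e e2 ..
  also have "\<dots> = real (Suc y) / (real k + real (Suc y))"
  proof -
    have h: "real y / (real k + real y) + (real k + real y - real y) / ((real k + real y + 1) * (real k + real y))
        = (real y + 1) / (real k + real y + 1)"
      by (rule tel_step) (use p in simp)
    have h2: "real k + real y - real y = real k" by simp
    have h3: "real (Suc y) = real y + 1" by simp
    have h4: "real k + (real y + 1) = real k + real y + 1" by simp
    show ?thesis using h unfolding h2 h3 h4 .
  qed
  finally show ?case .
qed

lemma perm_sigma:
  fixes f :: "nat \<Rightarrow> real"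
  assumes "finite J"
  shows "\<exists>\<sigma>. inj_on \<sigma> {1..card J} \<and> \<sigma> ` {1..card J} \<subseteq> J \<and>
     (\<forall>s\<in>{1..card J}. kth_largest f J s = f (\<sigma> s))"
proof -
  define L where "L = sorted_list_of_set J"
  define W where "W = rev (sort (map f L))"
  have lenL: "length L = card J" unfolding L_def by simp
  have dL: "distinct L" unfolding L_def by simp
  have sL: "set L = J" unfolding L_def using assms by simp
  have "mset W = mset (map f L)" unfolding W_def by simp
  then obtain q where q: "q permutes {..<length (map f L)}" "permute_list q (map f L) = W"
    by (rule mset_eq_permutation)
  have lW: "length W = length (map f L)" using q(2) by auto
  have p: "bij_betw q {..<length W} {..<length (map f L)}"
      "\<forall>i<length W. W ! i = map f L ! (q i)"
    using permutes_imp_bij[OF q(1)] lW q(2) permute_list_nth[OF q(1)] by auto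
  have lenW: "length W = card J" unfolding W_def using lenL by simp
  define \<sigma> where "\<sigma> s = L ! q (s - 1)" for s
  have pin: "q (s - 1) < card J" if "s \<in> {1..card J}" for s
    using p(1) that lenL lenW unfolding bij_betw_def by auto
  have "inj_on \<sigma> {1..card J}"
  proof (rule inj_onI)
    fix a b assume a: "a \<in> {1..card J}" and b: "b \<in> {1..card J}" and e: "\<sigma> a = \<sigma> b"
    have "q (a - 1) = q (b - 1)" using e pin[OF a] pin[OF b] dL lenL
      unfolding \<sigma>_def by (simp add: nth_eq_iff_index_eq)
    then have "a - 1 = b - 1" using p(1) a b lenW unfolding bij_betw_def inj_on_def by auto
    then show "a = b" using a b by auto
  qed
  moreover have "\<sigma> ` {1..card J} \<subseteq> J"
    using pin sL lenL unfolding \<sigma>_def by (auto intro!: nth_mem)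
  moreover have "\<forall>s\<in>{1..card J}. kth_largest f J s = f (\<sigma> s)"
  proof
    fix s assume s: "s \<in> {1..card J}"
    have "kth_largest f J s = W ! (s - 1)" unfolding kth_largest_def W_def L_def by simp
    also have "\<dots> = map f L ! q (s - 1)" using p(2) s lenW by auto
    also have "\<dots> = f (\<sigma> s)" using pin[OF s] lenL unfolding \<sigma>_def by simp
    finally show "kth_largest f J s = f (\<sigma> s)" .
  qed
  ultimately show ?thesis by blast
qed

lemma meas_card:
  assumes "\<And>i. i \<in> N \<Longrightarrow> A i \<in> sets M" and "finite N"
  shows "(\<lambda>\<omega>. card {i\<in>N. \<omega> \<in> A i}) \<in> M \<rightarrow>\<^sub>M count_space UNIV"
proof -
  have e: "card {i\<in>N. \<omega> \<in> A i} = (\<Sum>i\<in>N. (if \<omega> \<in> A i then 1 else 0::nat))" if "finite N" for \<omega>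
    using that by (simp add: sum.If_cases Int_def)
  show ?thesis
    unfolding e[OF assms(2)]
      by (intro measurable_sum_nat) (use assms in measurable)
qed


lemma binom_lemma:
  assumes "1 \<le> k"
  shows "binom_int (int x - 1) (int k) = real (x choose k) * ((real x - real k) / real x)"
proof (cases "x = 0")
  case True
  then show ?thesis using assms by (simp add: binom_int_def)
next
  case False
  have L: "binom_int (int x - 1) (int k) = real ((x - 1) choose k)"
    using False by (auto simp: binom_int_def of_nat_diff nat_diff_distrib)
  have ab: "(x - k) * (x choose k) = x * ((x - 1) choose k)" by (rule binomial_absorb_comp)
  show ?thesis
  proof (cases "k \<le> x")
    case True
    have "real (x - k) * real (x choose k) = real x * real ((x - 1) choose k)"
      using ab by (metis of_nat_mult)
    then have "(real x - real k) * real (x choose k) = real x * real ((x - 1) choose k)"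
      using True by (simp add: of_nat_diff)
    then show ?thesis unfolding L using False by (simp add: field_simps)
  next
    case False
    then show ?thesis unfolding L by (simp add: binomial_eq_0)
  qed
qed

theorem lemma5:
  fixes M :: "'a measure" and A :: "nat \<Rightarrow> 'a set" and n k :: nat
  assumes "prob_space M"
    and "\<And>i. i \<in> {1..n} \<Longrightarrow> A i \<in> sets M"
    and "1 \<le> k" and "k < n"
  shows "prob_space.expectation M
           (\<lambda>\<omega>. binom_int (int (card {i \<in> {1..n}. \<omega> \<in> A i}) - 1) (int k))
         \<ge> (\<Sum>I | I \<subseteq> {1..n} \<and> card I = k.
              \<Sum>s = 1..n - k. kth_largest (\<lambda>j. measure M ((\<Inter>i\<in>I. A i) \<inter> A j)) ({1..n} - I) s
                 * (real k / (real (k + s) * real (k + s - 1))))"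
proof -
  interpret P: prob_space M by fact
  define m where "m = n - k"
  define c where "c s = real k / (real (k + s) * real (k + s - 1))" for s
  define II where "II = {I. I \<subseteq> {1..n} \<and> card I = k}"
  define B where "B I = (\<Inter>i\<in>I. A i)" for I
  have finII: "finite II" unfolding II_def
    by (rule finite_subset[of _ "Pow {1..n}"]) auto
  have cardJ: "card ({1..n} - I) = m" if "I \<in> II" for I
    using that unfolding II_def m_def by (auto simp: card_Diff_subset finite_subset)
  have "\<forall>I\<in>II. \<exists>\<sigma>. inj_on \<sigma> {1..m} \<and> \<sigma> ` {1..m} \<subseteq> {1..n} - I \<and>
     (\<forall>s\<in>{1..m}. kth_largest (\<lambda>j. measure M (B I \<inter> A j)) ({1..n} - I) s = measure M (B I \<inter> A (\<sigma> s)))"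
  proof
    fix I assume I: "I \<in> II"
    have "finite ({1..n} - I)" by simp
    from perm_sigma[OF this, of "\<lambda>j. measure M (B I \<inter> A j)"] cardJ[OF I]
    show "\<exists>\<sigma>. inj_on \<sigma> {1..m} \<and> \<sigma> ` {1..m} \<subseteq> {1..n} - I \<and>
     (\<forall>s\<in>{1..m}. kth_largest (\<lambda>j. measure M (B I \<inter> A j)) ({1..n} - I) s = measure M (B I \<inter> A (\<sigma> s)))"
      by simp
  qed
  from bchoice[OF this] obtain \<sigma> where \<sigma>0: "\<forall>I\<in>II. inj_on (\<sigma> I) {1..m} \<and> \<sigma> I ` {1..m} \<subseteq> {1..n} - I \<and>
     (\<forall>s\<in>{1..m}. kth_largest (\<lambda>j. measure M (B I \<inter> A j)) ({1..n} - I) s = measure M (B I \<inter> A (\<sigma> I s)))"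
    by blast
  have \<sigma>: "inj_on (\<sigma> I) {1..m} \<and> \<sigma> I ` {1..m} \<subseteq> {1..n} - I \<and>
     (\<forall>s\<in>{1..m}. kth_largest (\<lambda>j. measure M (B I \<inter> A j)) ({1..n} - I) s = measure M (B I \<inter> A (\<sigma> I s)))"
    if "I \<in> II" for I using \<sigma>0 that by blast
  define E where "E I s = B I \<inter> A (\<sigma> I s)" for I s
  have BI: "B I \<in> sets M" if "I \<in> II" for I
  proof -
    have "I \<noteq> {}" "finite I" "I \<subseteq> {1..n}" using that assms(3) unfolding II_def
      by (auto simp: finite_subset)
    then show ?thesis unfolding B_def using assms(2) by (intro sets.finite_INT) auto
  qed
  have EI: "E I s \<in> sets M" if "I \<in> II" "s \<in> {1..m}" for I s
    using BI[OF that(1)] \<sigma>[OF that(1)] that(2) assms(2) unfolding E_def by blast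
  define G where "G \<omega> = (\<Sum>I\<in>II. \<Sum>s=1..m. c s * indicator (E I s) \<omega>)" for \<omega>
  define g where "g \<omega> = binom_int (int (card {i \<in> {1..n}. \<omega> \<in> A i}) - 1) (int k)" for \<omega>
  have RHS: "(\<Sum>I | I \<subseteq> {1..n} \<and> card I = k.
              \<Sum>s = 1..n - k. kth_largest (\<lambda>j. measure M ((\<Inter>i\<in>I. A i) \<inter> A j)) ({1..n} - I) s
                 * (real k / (real (k + s) * real (k + s - 1))))
        = (\<Sum>I\<in>II. \<Sum>s=1..m. c s * measure M (E I s))"
    unfolding II_def[symmetric] m_def[symmetric] B_def[symmetric] c_def[symmetric]
    by (intro sum.cong refl) (use \<sigma> in \<open>auto simp: E_def\<close>)
  have intE: "integrable M (\<lambda>\<omega>. c s * indicator (E I s) \<omega> :: real)" if "I \<in> II" "s \<in> {1..m}" for I s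
  proof -
    have "integrable M (indicator (E I s) :: 'a \<Rightarrow> real)"
      using EI[OF that] by (simp add: P.emeasure_finite less_top[symmetric])
    then show ?thesis by auto
  qed
  have intG: "integrable M G" unfolding G_def
    apply (rule Bochner_Integration.integrable_sum, rule Bochner_Integration.integrable_sum) by (rule intE)
  have "integral\<^sup>L M G = (\<Sum>I\<in>II. integral\<^sup>L M (\<lambda>\<omega>. \<Sum>s=1..m. c s * indicator (E I s) \<omega>))"
    unfolding G_def apply (rule Bochner_Integration.integral_sum, rule Bochner_Integration.integrable_sum) by (rule intE)
  also have "\<dots> = (\<Sum>I\<in>II. \<Sum>s=1..m. integral\<^sup>L M (\<lambda>\<omega>. c s * indicator (E I s) \<omega>))"
    apply (rule sum.cong[OF refl], rule Bochner_Integration.integral_sum) by (rule intE)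
  also have "\<dots> = (\<Sum>I\<in>II. \<Sum>s=1..m. c s * measure M (E I s))"
  proof (intro sum.cong refl)
    fix I s assume "I \<in> II" "s \<in> {1..m}"
    then have "E I s \<subseteq> space M" using EI sets.sets_into_space by blast
    then show "integral\<^sup>L M (\<lambda>\<omega>. c s * indicator (E I s) \<omega>) = c s * measure M (E I s)"
      by (simp add: Int_absorb2)
  qed
  finally have intGv: "integral\<^sup>L M G = (\<Sum>I\<in>II. \<Sum>s=1..m. c s * measure M (E I s))" .
  have gmeas: "g \<in> borel_measurable M"
  proof -
    have X: "(\<lambda>\<omega>. card {i \<in> {1..n}. \<omega> \<in> A i}) \<in> M \<rightarrow>\<^sub>M count_space UNIV"
      using assms(2) by (intro meas_card) auto
    have "(\<lambda>x::nat. binom_int (int x - 1) (int k)) \<in> borel_measurable (count_space UNIV)"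
      by (rule borel_measurable_count_space)
    then show ?thesis unfolding g_def by (rule measurable_compose[OF X])
  qed
  have intg: "integrable M g"
  proof (rule P.integrable_const_bound[where B = "\<Sum>x\<le>n. \<bar>binom_int (int x - 1) (int k)\<bar>"])
    show "AE \<omega> in M. norm (g \<omega>) \<le> (\<Sum>x\<le>n. \<bar>binom_int (int x - 1) (int k)\<bar>)"
    proof (rule AE_I2)
      fix \<omega>
      have "card {i \<in> {1..n}. \<omega> \<in> A i} \<le> card {1..n}"
        by (intro card_mono) auto
      then have "card {i \<in> {1..n}. \<omega> \<in> A i} \<le> n" by simp
      then show "norm (g \<omega>) \<le> (\<Sum>x\<le>n. \<bar>binom_int (int x - 1) (int k)\<bar>)"
        unfolding g_def real_norm_def
        by (intro member_le_sum[where f = "\<lambda>x. \<bar>binom_int (int x - 1) (int k)\<bar>"]) auto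
    qed
  qed (rule gmeas)
  have cmono: "c b \<le> c a" if "1 \<le> a" "a \<le> b" for a b
  proof -
    define da where "da = real (k + a) * real (k + a - 1)"
    define db where "db = real (k + b) * real (k + b - 1)"
    have p: "0 < da" using that assms(3) unfolding da_def by auto
    have le: "da \<le> db" unfolding da_def db_def
      using that by (intro mult_mono) auto
    have "0 < db * da" using p le by simp
    then have "real k / db \<le> real k / da" by (intro divide_left_mono le) auto
    then show ?thesis unfolding c_def da_def db_def .
  qed
  have cpos: "0 \<le> c s" for s unfolding c_def by simp
  have pt: "G \<omega> \<le> g \<omega>" if "\<omega> \<in> space M" for \<omega>
  proof -
    define S where "S = {i \<in> {1..n}. \<omega> \<in> A i}"
    define x where "x = card S"
    define v where "v = (real x - real k) / real x"
    have finS: "finite S" unfolding S_def by simp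
    have "g \<omega> = real (x choose k) * v" unfolding g_def S_def[symmetric] x_def[symmetric] v_def
      by (rule binom_lemma[OF assms(3)])
    also have "x choose k = card {I \<in> II. I \<subseteq> S}"
    proof -
      have "{I \<in> II. I \<subseteq> S} = {I. I \<subseteq> S \<and> card I = k}" unfolding II_def S_def by auto
      then show ?thesis unfolding x_def using n_subsets[OF finS] by simp
    qed
    also have "real (card {I \<in> II. I \<subseteq> S}) * v = (\<Sum>I\<in>II. of_bool (I \<subseteq> S) * v)"
      using finII by (simp add: sum.inter_filter[symmetric] Int_def)
    finally have geq: "g \<omega> = (\<Sum>I\<in>II. of_bool (I \<subseteq> S) * v)" .
    have "(\<Sum>s=1..m. c s * indicator (E I s) \<omega>) \<le> of_bool (I \<subseteq> S) * v" if I: "I \<in> II" for I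
    proof (cases "I \<subseteq> S")
      case True
      have Isub: "I \<subseteq> {1..n}" "card I = k" "finite I" using I unfolding II_def by (auto simp: finite_subset)
      have wB: "\<omega> \<in> B I" using True unfolding B_def S_def by auto
      have ind: "indicator (E I s) \<omega> = of_bool (\<sigma> I s \<in> S - I)" if "s \<in> {1..m}" for s
      proof -
        have mem: "\<sigma> I s \<in> {1..n} - I" using \<sigma>[OF I] that by blast
        have "(\<omega> \<in> E I s) = (\<sigma> I s \<in> S - I)"
          using mem wB unfolding E_def S_def by auto
        then show ?thesis by (simp add: indicator_def)
      qed
      have kx: "k \<le> x" unfolding x_def using card_mono[OF finS True] Isub by simp
      have cd: "card (S - I) = x - k" unfolding x_def using True Isub by (simp add: card_Diff_subset)
      have "(\<Sum>s=1..m. c s * indicator (E I s) \<omega>) = (\<Sum>s=1..m. c s * of_bool (\<sigma> I s \<in> S - I))"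
        by (intro sum.cong refl) (simp add: ind)
      also have "\<dots> \<le> (\<Sum>s=1..card (S - I). c s)"
        using \<sigma>[OF I] finS by (intro rearr2 cmono cpos) auto
      also have "\<dots> = real (x - k) / (real k + real (x - k))"
        unfolding cd c_def by (rule telesc[OF assms(3)])
      also have "\<dots> = of_bool (I \<subseteq> S) * v" using True kx unfolding v_def by (simp add: of_nat_diff)
      finally show ?thesis .
    next
      case False
      then obtain i where "i \<in> I" "\<omega> \<notin> A i" using I unfolding II_def S_def by auto
      then have "\<omega> \<notin> B I" unfolding B_def by auto
      then have "indicator (E I s) \<omega> = (0::real)" for s unfolding E_def by simp
      then show ?thesis using False by simp
    qed
    then show ?thesis unfolding G_def geq by (rule sum_mono)
  qed
  have "integral\<^sup>L M G \<le> integral\<^sup>L M g"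
    by (rule integral_mono[OF intG intg pt])
  then show ?thesis unfolding RHS intGv[symmetric] g_def by simp
qed


end
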